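(* Let $R$ be a ring. The following are equivalent: (1) $R$ is an NCUC ring; (2) every strongly nil-clean element of $R$ is uniquely clean; (3) every idempotent of $R$ is uniquely clean; (4) $R$ is abelian; (5) $R$ is an NCUNC ring.
   Context: All rings are associative with identity $1$. For a ring $R$, $\mathrm{Id}(R)$, $U(R)$, $\mathrm{Nil}(R)$ denote the sets of idempotents, units and nilpotent elements. An element $a\in R$ is uniquely clean if there is exactly one $e\in \mathrm{Id}(R)$ with $a-e\in U(R)$. An element $a$ is nil-clean if $a=e+q$ with $e\in \mathrm{Id}(R)$, $q\in\mathrm{Nil}(R)$, strongly nil-clean if moreover $eq=qe$ can be arranged, and uniquely nil-clean if there is exactly one $e\in\mathrm{Id}(R)$ with $a-e\in\mathrm{Nil}(R)$. $R$ is NCUC if every nil-clean element of $R$ is uniquely clean, and NCUNC if every nil-clean element of $R$ is uniquely nil-clean. $R$ is abelian if all its idempotents are central. *)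

theory Defs
  imports Main
begin

definition idem :: "'a::ring_1 \<Rightarrow> bool" where
  "idem e \<longleftrightarrow> e * e = e"

definition unit_elem :: "'a::ring_1 \<Rightarrow> bool" where
  "unit_elem u \<longleftrightarrow> (\<exists>v. u * v = 1 \<and> v * u = 1)"

definition nilp :: "'a::ring_1 \<Rightarrow> bool" where
  "nilp q \<longleftrightarrow> (\<exists>n. q ^ n = 0)"

definition uniquely_clean :: "'a::ring_1 \<Rightarrow> bool" where
  "uniquely_clean a \<longleftrightarrow> (\<exists>!e. idem e \<and> unit_elem (a - e))"

definition nil_clean :: "'a::ring_1 \<Rightarrow> bool" where
  "nil_clean a \<longleftrightarrow> (\<exists>e q. idem e \<and> nilp q \<and> a = e + q)"

definition strongly_nil_clean :: "'a::ring_1 \<Rightarrow> bool" where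
  "strongly_nil_clean a \<longleftrightarrow> (\<exists>e q. idem e \<and> nilp q \<and> e * q = q * e \<and> a = e + q)"

definition uniquely_nil_clean :: "'a::ring_1 \<Rightarrow> bool" where
  "uniquely_nil_clean a \<longleftrightarrow> (\<exists>!e. idem e \<and> nilp (a - e))"

definition NCUC :: "'a::ring_1 itself \<Rightarrow> bool" where
  "NCUC _ \<longleftrightarrow> (\<forall>a::'a. nil_clean a \<longrightarrow> uniquely_clean a)"

definition NCUNC :: "'a::ring_1 itself \<Rightarrow> bool" where
  "NCUNC _ \<longleftrightarrow> (\<forall>a::'a. nil_clean a \<longrightarrow> uniquely_nil_clean a)"

definition abelian_ring :: "'a::ring_1 itself \<Rightarrow> bool" where
  "abelian_ring _ \<longleftrightarrow> (\<forall>e::'a. idem e \<longrightarrow> (\<forall>x. e * x = x * e))"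

end

theory Submission
  imports Defs
begin

lemma geom_l: "(1 - q) * (\<Sum>i<n. q ^ i) = (1::'a::ring_1) - q ^ n"
proof (induction n)
  case (Suc n)
  have "(1 - q) * (\<Sum>i<Suc n. q ^ i) = (1 - q) * (\<Sum>i<n. q ^ i) + (1 - q) * q ^ n"
    by (simp add: distrib_left)
  also have "\<dots> = 1 - q ^ n + (q ^ n - q * q ^ n)" using Suc by (simp add: left_diff_distrib)
  also have "\<dots> = 1 - q ^ Suc n" by simp
  finally show ?case .
qed simp

lemma geom_r: "(\<Sum>i<n. q ^ i) * (1 - q) = (1::'a::ring_1) - q ^ n"
proof (induction n)
  case (Suc n)
  have "(\<Sum>i<Suc n. q ^ i) * (1 - q) = (\<Sum>i<n. q ^ i) * (1 - q) + q ^ n * (1 - q)"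
    by (simp add: distrib_right)
  also have "\<dots> = 1 - q ^ n + (q ^ n - q ^ n * q)" using Suc by (simp add: right_diff_distrib)
  also have "\<dots> = 1 - q ^ Suc n" by (simp add: power_Suc2 power_commutes)
  finally show ?case .
qed simp

lemma nilp_unit_minus: "nilp (q::'a::ring_1) \<Longrightarrow> unit_elem (1 - q)"
  unfolding nilp_def unit_elem_def using geom_l geom_r by (metis diff_zero)

lemma nilp_neg: "nilp (q::'a::ring_1) \<Longrightarrow> nilp (- q)"
  unfolding nilp_def by (metis power_minus mult_zero_right)

lemma nilp_unit_plus: "nilp (q::'a::ring_1) \<Longrightarrow> unit_elem (1 + q)"
  using nilp_unit_minus[OF nilp_neg] by simp

lemma unit_pow: "unit_elem (u::'a::ring_1) \<Longrightarrow> unit_elem (u ^ n)"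
proof -
  assume "unit_elem u"
  then obtain v where v: "u * v = 1" "v * u = 1" unfolding unit_elem_def by blast
  have "u ^ n * v ^ n = 1 \<and> v ^ n * u ^ n = 1"
  proof (induction n)
    case (Suc n)
    have "u ^ Suc n * v ^ Suc n = u ^ n * (u * v) * v ^ n"
      unfolding power_Suc2[of u] power_Suc[of v] by (simp only: mult.assoc)
    moreover have "v ^ Suc n * u ^ Suc n = v ^ n * (v * u) * u ^ n"
      unfolding power_Suc2[of v] power_Suc[of u] by (simp only: mult.assoc)
    ultimately show ?case using Suc v by simp
  qed simp
  then show ?thesis unfolding unit_elem_def by blast
qed

lemma unit_kill: "unit_elem (u::'a::ring_1) \<Longrightarrow> g * u = 0 \<Longrightarrow> g = 0"
  unfolding unit_elem_def by (metis mult.assoc mult_1_right mult_zero_left)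

lemma central_pow:
  assumes "idem (g::'a::ring_1)" "\<forall>x. g * x = x * g"
  shows "(g * y) ^ Suc n = g * y ^ Suc n"
proof (induction n)
  case (Suc n)
  have "(g * y) ^ Suc (Suc n) = g * y * (g * y ^ Suc n)" using Suc by (simp only: power_Suc)
  also have "\<dots> = (g * g) * (y * y ^ Suc n)" using assms(2) by (metis mult.assoc)
  also have "\<dots> = g * y ^ Suc (Suc n)" using assms(1) by (simp add: idem_def)
  finally show ?case .
qed simp

lemma nilp_central_mult:
  assumes "idem (g::'a::ring_1)" "\<forall>x. g * x = x * g" "nilp q"
  shows "nilp (g * q)"
proof -
  obtain n where n: "q ^ n = 0" using assms(3) unfolding nilp_def by blast
  have "(g * q) ^ Suc n = g * q ^ n * q" using central_pow[OF assms(1,2)]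
    by (simp add: power_Suc2 mult.assoc power_commutes)
  then show ?thesis unfolding nilp_def using n by (metis mult_zero_right mult_zero_left)
qed

lemma central_kill:
  assumes "idem (g::'a::ring_1)" "\<forall>x. g * x = x * g" "unit_elem y" "nilp (g * y)"
  shows "g = 0"
proof -
  obtain n where n: "(g * y) ^ n = 0" using assms(4) unfolding nilp_def by blast
  have "(g * y) ^ Suc n = 0" using n by (simp add: power_Suc2)
  then have "g * y ^ Suc n = 0" using central_pow[OF assms(1,2)] by simp
  then show ?thesis using unit_kill[OF unit_pow[OF assms(3)]] by blast
qed

lemma idem_zero: "idem (0::'a::ring_1)" by (simp add: idem_def)
lemma idem_compl: "idem (e::'a::ring_1) \<Longrightarrow> idem (1 - e)"
  by (simp add: idem_def algebra_simps)
lemma nilp_zero: "nilp (0::'a::ring_1)" unfolding nilp_def by (metis power_one_right)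

lemma idem_mult_central: "idem (e::'a::ring_1) \<Longrightarrow> idem f \<Longrightarrow> \<forall>x. e * x = x * e \<Longrightarrow> idem (e * f)"
  unfolding idem_def by (metis mult.assoc)


lemma ncunc_abelian:
  assumes "NCUNC TYPE('a::ring_1)"
  shows "abelian_ring TYPE('a)"
  unfolding abelian_ring_def
proof (intro allI impI)
  fix e x :: 'a assume e: "idem e"
  have ee: "e * e = e" using e by (simp add: idem_def)
  have key: "h = 0" if h1: "e * h = h" "h * e = 0" "h * h = 0" for h
  proof -
    have "idem (e + h)" using h1 ee by (simp add: idem_def algebra_simps)
    have nh: "nilp h" unfolding nilp_def using h1(3) by (metis power2_eq_square)
    have "nil_clean (e + h)" unfolding nil_clean_def using e nh by blast
    then have "uniquely_nil_clean (e + h)" using assms unfolding NCUNC_def by blast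
    then have "e = e + h" unfolding uniquely_nil_clean_def
      using e nh \<open>idem (e + h)\<close> nilp_zero by fastforce
    then show ?thesis by simp
  qed
  have k2: "h = 0" if h1: "e * h = 0" "h * e = h" "h * h = 0" for h
  proof -
    have "idem (e + h)" using h1 ee by (simp add: idem_def algebra_simps)
    have nh: "nilp h" unfolding nilp_def using h1(3) by (metis power2_eq_square)
    have "nil_clean (e + h)" unfolding nil_clean_def using e nh by blast
    then have "uniquely_nil_clean (e + h)" using assms unfolding NCUNC_def by blast
    then have "e = e + h" unfolding uniquely_nil_clean_def
      using e nh \<open>idem (e + h)\<close> nilp_zero by fastforce
    then show ?thesis by simp
  qed
  have c1: "(1 - e) * e = 0" "e * (1 - e) = 0" using ee by (simp_all add: algebra_simps)
  have c2: "(1 - e) * ((1 - e) * z) = (1 - e) * z" "e * (e * z) = e * z" for z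
    using ee by (simp_all add: mult.assoc[symmetric] algebra_simps)
  have c3: "(1 - e) * (e * z) = 0" "e * ((1 - e) * z) = 0" for z
    using c1 by (simp_all only: mult.assoc[symmetric] mult_zero_left)
  have "e * x * (1 - e) = 0" by (rule key) (simp_all only: mult.assoc c1 c2 c3 ee mult_zero_right mult_zero_left)
  moreover have "(1 - e) * x * e = 0" by (rule k2) (simp_all only: mult.assoc c1 c2 c3 ee mult_zero_right mult_zero_left)
  ultimately have "e * x - e * x * e = 0" "x * e - e * x * e = 0"
    by (simp_all add: right_diff_distrib left_diff_distrib)
  then show "e * x = x * e" by simp
qed


lemma iduc_abelian:
  assumes A: "\<forall>e::'a::ring_1. idem e \<longrightarrow> uniquely_clean e"
  shows "abelian_ring TYPE('a)"
  unfolding abelian_ring_def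
proof (intro allI impI)
  fix e x :: 'a assume e: "idem e"
  have ee: "e * e = e" using e by (simp add: idem_def)
  have uc: "uniquely_clean e" using A e by blast
  have u0: "unit_elem (e - (1 - e))" unfolding unit_elem_def
    by (rule exI[of _ "e - (1 - e)"]) (simp add: algebra_simps ee)
  have key: "h = 0" if h1: "e * h = h" "h * e = 0" "h * h = 0" for h
  proof -
    have "idem ((1 - e) + h)" using h1 ee by (simp add: idem_def algebra_simps)
    have "unit_elem (e - ((1 - e) + h))" unfolding unit_elem_def
      by (rule exI[of _ "e - ((1 - e) + h)"]) (simp add: algebra_simps ee h1)
    then have "1 - e = (1 - e) + h" using uc u0 idem_compl[OF e] \<open>idem ((1 - e) + h)\<close>
      unfolding uniquely_clean_def by blast
    then show ?thesis by simp
  qed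
  have k2: "h = 0" if h1: "e * h = 0" "h * e = h" "h * h = 0" for h
  proof -
    have "idem ((1 - e) + h)" using h1 ee by (simp add: idem_def algebra_simps)
    have "unit_elem (e - ((1 - e) + h))" unfolding unit_elem_def
      by (rule exI[of _ "e - ((1 - e) + h)"]) (simp add: algebra_simps ee h1)
    then have "1 - e = (1 - e) + h" using uc u0 idem_compl[OF e] \<open>idem ((1 - e) + h)\<close>
      unfolding uniquely_clean_def by blast
    then show ?thesis by simp
  qed
  have c1: "(1 - e) * e = 0" "e * (1 - e) = 0" using ee by (simp_all add: algebra_simps)
  have c2: "(1 - e) * ((1 - e) * z) = (1 - e) * z" "e * (e * z) = e * z" for z
    using ee by (simp_all add: mult.assoc[symmetric] algebra_simps)
  have c3: "(1 - e) * (e * z) = 0" "e * ((1 - e) * z) = 0" for z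
    using c1 by (simp_all only: mult.assoc[symmetric] mult_zero_left)
  have "e * x * (1 - e) = 0" by (rule key) (simp_all only: mult.assoc c1 c2 c3 ee mult_zero_right mult_zero_left)
  moreover have "(1 - e) * x * e = 0" by (rule k2) (simp_all only: mult.assoc c1 c2 c3 ee mult_zero_right mult_zero_left)
  ultimately have "e * x - e * x * e = 0" "x * e - e * x * e = 0"
    by (simp_all add: right_diff_distrib left_diff_distrib)
  then show "e * x = x * e" by simp
qed

lemma peirce_unit:
  fixes e x y z :: "'a::ring_1"
  assumes ee: "e * e = e" and c: "\<forall>t. e * t = t * e"
    and 1: "e * x * y = e" "e * y * x = e" "(1 - e) * x * z = 1 - e" "(1 - e) * z * x = 1 - e"
  shows "unit_elem x"
proof -
  have c': "(1 - e) * t = t * (1 - e)" for t using c by (simp add: algebra_simps)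
  have "x * (e * y + (1 - e) * z) = (x * e) * y + (x * (1 - e)) * z"
    by (simp add: distrib_left mult.assoc)
  also have "\<dots> = e * x * y + (1 - e) * x * z"
    by (simp only: c[rule_format, of x, symmetric] c'[of x, symmetric])
  finally have "x * (e * y + (1 - e) * z) = e * x * y + (1 - e) * x * z" .
  moreover have "(e * y + (1 - e) * z) * x = e * y * x + (1 - e) * z * x"
    by (simp add: distrib_right)
  ultimately show ?thesis unfolding unit_elem_def using 1
    by (metis add_diff_cancel_left' diff_add_cancel)
qed

lemma abelian_ncuc:
  assumes ab: "abelian_ring TYPE('a::ring_1)"
  shows "NCUC TYPE('a)"
  unfolding NCUC_def uniquely_clean_def
proof (intro allI impI)
  fix a :: 'a assume "nil_clean a"
  then obtain e q where e: "idem e" and q: "nilp q" and a: "a = e + q" unfolding nil_clean_def by blast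
  have cen: "\<forall>t. g * t = t * g" if "idem g" for g :: 'a using ab that unfolding abelian_ring_def by blast
  have ee: "e * e = e" using e by (simp add: idem_def)
  have ce: "\<forall>t. e * t = t * e" using cen e by blast
  obtain w1 where w1: "(1 + q) * w1 = 1" "w1 * (1 + q) = 1" using nilp_unit_plus[OF q] unfolding unit_elem_def by blast
  obtain w2 where w2: "(1 - q) * w2 = 1" "w2 * (1 - q) = 1" using nilp_unit_minus[OF q] unfolding unit_elem_def by blast
  have ex: "e * (a - (1 - e)) = e * (1 + q)" using ee unfolding a by (simp add: algebra_simps)
  have ex2: "(1 - e) * (a - (1 - e)) = (1 - e) * (- (1 - q))" using ee unfolding a by (simp add: algebra_simps)
  have "unit_elem (a - (1 - e))"
  proof (rule peirce_unit[OF ee ce])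
    show "e * (a - (1 - e)) * w1 = e" using ex w1 by (simp add: mult.assoc)
    show "e * w1 * (a - (1 - e)) = e" using ex w1 ce by (metis mult.assoc mult_1_right)
    have "(q - 1) * w2 = -1" using w2 by (metis minus_diff_eq mult_minus_left)
    then show "(1 - e) * (a - (1 - e)) * (- w2) = 1 - e" using ex2 by (simp add: mult.assoc)
    have c': "(1 - e) * t = t * (1 - e)" for t using ce by (simp add: algebra_simps)
    show "(1 - e) * (- w2) * (a - (1 - e)) = 1 - e" using ex2 w2 c'
      by (metis mult.assoc mult_1_right mult_minus_right minus_mult_left minus_minus)
  qed
  moreover have "f = 1 - e" if f: "idem f" "unit_elem (a - f)" for f
  proof -
    have ff: "f * f = f" using f by (simp add: idem_def)
    have cf: "\<forall>t. f * t = t * f" using cen f by blast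
    have g1: "idem (e * f)" using idem_mult_central[OF e f(1) ce] .
    have cg1: "\<forall>t. e * f * t = t * (e * f)" using ce cf by (metis mult.assoc)
    have t1: "e * f * e = e * f" using ce ee by (metis mult.assoc)
    have t2: "e * f * f = e * f" using ff by (metis mult.assoc)
    have "e * f * (a - f) = e * f * e + e * f * q - e * f * f" unfolding a
      by (simp only: distrib_left right_diff_distrib)
    then have "e * f * (a - f) = e * f * q" using t1 t2 by simp
    then have "nilp (e * f * (a - f))" using nilp_central_mult[OF g1 cg1 q] by simp
    then have z1: "e * f = 0" using central_kill[OF g1 cg1 f(2)] by blast
    have g2: "idem ((1 - e) * (1 - f))" using idem_mult_central[OF idem_compl[OF e] idem_compl[OF f(1)]] ce
      by (simp add: algebra_simps)
    have ce': "\<forall>t. (1 - e) * t = t * (1 - e)" using ce by (simp add: algebra_simps)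
    have cf': "\<forall>t. (1 - f) * t = t * (1 - f)" using cf by (simp add: algebra_simps)
    have cg2: "\<forall>t. (1 - e) * (1 - f) * t = t * ((1 - e) * (1 - f))" using ce' cf'
      by (metis mult.assoc)
    have o1: "(1 - e) * e = 0" "(1 - f) * f = 0" using ee ff by (simp_all add: algebra_simps)
    have t1: "(1 - e) * (1 - f) * e = 0" using o1 cf' by (metis mult.assoc mult_zero_right)
    have t2: "(1 - e) * (1 - f) * f = 0" using o1 by (metis mult.assoc mult_zero_right)
    have "(1 - e) * (1 - f) * (a - f) = (1 - e) * (1 - f) * e + (1 - e) * (1 - f) * q - (1 - e) * (1 - f) * f"
      unfolding a by (simp only: distrib_left right_diff_distrib)
    then have "(1 - e) * (1 - f) * (a - f) = (1 - e) * (1 - f) * q" using t1 t2 by simp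
    then have "nilp ((1 - e) * (1 - f) * (a - f))" using nilp_central_mult[OF g2 cg2 q] by simp
    then have z2: "(1 - e) * (1 - f) = 0" using central_kill[OF g2 cg2 f(2)] by blast
    then show ?thesis using z1 by (simp add: algebra_simps)
  qed
  ultimately show "\<exists>!f. idem f \<and> unit_elem (a - f)" using idem_compl[OF e] by blast
qed

lemma abelian_ncunc:
  assumes ab: "abelian_ring TYPE('a::ring_1)"
  shows "NCUNC TYPE('a)"
  unfolding NCUNC_def uniquely_nil_clean_def
proof (intro allI impI)
  fix a :: 'a assume "nil_clean a"
  then obtain e q where e: "idem e" and q: "nilp q" and a: "a = e + q" unfolding nil_clean_def by blast
  have cen: "\<forall>t. g * t = t * g" if "idem g" for g :: 'a using ab that unfolding abelian_ring_def by blast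
  have main: "e * f = e" if e: "idem e" and f: "idem f" and q: "nilp (a - e)" and r: "nilp (a - f)" for e f
  proof -
    have ee: "e * e = e" using e by (simp add: idem_def)
    have ff: "f * f = f" using f by (simp add: idem_def)
    have ce: "\<forall>t. e * t = t * e" using cen e by blast
    have cf: "\<forall>t. f * t = t * f" using cen f by blast
    have g: "idem (e * (1 - f))" using idem_mult_central[OF e idem_compl[OF f] ce] .
    have cf': "\<forall>t. (1 - f) * t = t * (1 - f)" using cf by (simp add: algebra_simps)
    have cg: "\<forall>t. e * (1 - f) * t = t * (e * (1 - f))" using ce cf'
      by (metis mult.assoc)
    have o1: "(1 - f) * f = 0" using ff by (simp add: algebra_simps)
    have t1: "e * (1 - f) * e = e * (1 - f)" using cf' ee by (metis mult.assoc)
    have t2: "e * (1 - f) * f = 0" using o1 by (metis mult.assoc mult_zero_right)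
    have "e * (1 - f) * (1 + (a - e)) = e * (1 - f) + e * (1 - f) * a - e * (1 - f) * e"
      by (simp only: distrib_left right_diff_distrib mult_1_right add_diff_eq)
    moreover have "e * (1 - f) * (a - f) = e * (1 - f) * a - e * (1 - f) * f"
      by (simp only: right_diff_distrib)
    ultimately have "e * (1 - f) * (1 + (a - e)) = e * (1 - f) * (a - f)" using t1 t2 by simp
    then have "nilp (e * (1 - f) * (1 + (a - e)))" using nilp_central_mult[OF g cg r] by simp
    then have "e * (1 - f) = 0" using central_kill[OF g cg nilp_unit_plus[OF q]] by blast
    then show ?thesis by (simp add: algebra_simps)
  qed
  show "\<exists>!f. idem f \<and> nilp (a - f)"
  proof
    show "idem e \<and> nilp (a - e)" using e q a by simp
    fix f assume f: "idem f \<and> nilp (a - f)"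
    have "e * f = e" using main[of e f] e f q a by simp
    moreover have "f * e = f" using main[of f e] e f q a by simp
    moreover have "e * f = f * e" using cen e by blast
    ultimately show "f = e" by simp
  qed
qed

theorem theorem3p5:
  shows "(NCUC TYPE('a::ring_1) \<longleftrightarrow> (\<forall>a::'a. strongly_nil_clean a \<longrightarrow> uniquely_clean a))
       \<and> ((\<forall>a::'a. strongly_nil_clean a \<longrightarrow> uniquely_clean a) \<longleftrightarrow> (\<forall>e::'a. idem e \<longrightarrow> uniquely_clean e))
       \<and> ((\<forall>e::'a. idem e \<longrightarrow> uniquely_clean e) \<longleftrightarrow> abelian_ring TYPE('a))
       \<and> (abelian_ring TYPE('a) \<longleftrightarrow> NCUNC TYPE('a))"
proof -
  have s1: "strongly_nil_clean a \<Longrightarrow> nil_clean a" for a :: 'a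
    unfolding strongly_nil_clean_def nil_clean_def by blast
  have s2: "idem e \<Longrightarrow> strongly_nil_clean e" for e :: 'a
    unfolding strongly_nil_clean_def using nilp_zero by (metis add_0_right mult_zero_left mult_zero_right)
  have A: "NCUC TYPE('a) \<Longrightarrow> (\<forall>a::'a. strongly_nil_clean a \<longrightarrow> uniquely_clean a)"
    unfolding NCUC_def using s1 by blast
  have B: "(\<forall>a::'a. strongly_nil_clean a \<longrightarrow> uniquely_clean a) \<Longrightarrow> (\<forall>e::'a. idem e \<longrightarrow> uniquely_clean e)"
    using s2 by blast
  show ?thesis using A B iduc_abelian abelian_ncuc abelian_ncunc ncunc_abelian by blast
qed

end
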